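(* Let $\pi_0:Z_0\to Z$ be the minimal resolution of a canonical surface singularity, with exceptional curves $E_1,\dots,E_r$ generating $\mathbf{E}_0\subseteq\operatorname{Pic}Z_0$ and numerical cycle $Z_{\mathrm{num}}$. Let $g:\mathbf{E}_0\to\mathbb{Q}$ be of the form $g(E)=-E^2+\ell(E)$ with $\ell$ linear and $\ell(E_i)\le0$ for all $i$. Then $g(E)>0$ for all nonzero effective $E\in\mathbf{E}_0$ if and only if $g(Z_{\mathrm{num}})>0$.
   Context: The numerical cycle $Z_{\mathrm{num}}$ is the minimal nonzero effective $\pi_0$-exceptional divisor $F$ with $F\cdot E_i\le0$ for all $i$. *)

theory Defs
  imports Complex_Main
begin

text \<open>Combinatorial model of the exceptional configuration of the minimal resolution
of a canonical (= rational double point) surface singularity.  The exceptional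
curves are indexed by a finite type 'i; M i j = E_i . E_j is the intersection matrix.
The lattice E_0 generated by the E_i is identified with 'i => int (coefficients).\<close>

definition isect :: "('i::finite \<Rightarrow> 'i \<Rightarrow> int) \<Rightarrow> ('i \<Rightarrow> int) \<Rightarrow> ('i \<Rightarrow> int) \<Rightarrow> int" where
  "isect M E F = (\<Sum>i\<in>UNIV. \<Sum>j\<in>UNIV. E i * F j * M i j)"

definition curve :: "'i \<Rightarrow> ('i \<Rightarrow> int)" where
  "curve i = (\<lambda>j. if j = i then 1 else 0)"

definition effective :: "('i \<Rightarrow> int) \<Rightarrow> bool" where
  "effective E \<longleftrightarrow> (\<forall>i. 0 \<le> E i)"

text \<open>Exceptional configuration of the minimal resolution of a canonical surface
singularity: smooth rational (-2)-curves, meeting transversally in at most one point,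
with negative definite intersection form and connected exceptional locus.\<close>
definition canonical_config :: "('i::finite \<Rightarrow> 'i \<Rightarrow> int) \<Rightarrow> bool" where
  "canonical_config M \<longleftrightarrow>
     (\<forall>i j. M i j = M j i) \<and>
     (\<forall>i. M i i = -2) \<and>
     (\<forall>i j. i \<noteq> j \<longrightarrow> M i j \<in> {0, 1}) \<and>
     (\<forall>E. E \<noteq> (\<lambda>_. 0) \<longrightarrow> isect M E E < 0) \<and>
     (\<forall>i j. (i, j) \<in> {(a, b). M a b \<noteq> 0}\<^sup>*)"

definition anti_nef :: "('i::finite \<Rightarrow> 'i \<Rightarrow> int) \<Rightarrow> ('i \<Rightarrow> int) \<Rightarrow> bool" where
  "anti_nef M F \<longleftrightarrow> (\<forall>i. isect M F (curve i) \<le> 0)"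

definition numerical_cycle :: "('i::finite \<Rightarrow> 'i \<Rightarrow> int) \<Rightarrow> ('i \<Rightarrow> int) \<Rightarrow> bool" where
  "numerical_cycle M Z \<longleftrightarrow>
     effective Z \<and> Z \<noteq> (\<lambda>_. 0) \<and> anti_nef M Z \<and>
     (\<forall>F. effective F \<and> F \<noteq> (\<lambda>_. 0) \<and> anti_nef M F \<and> (\<forall>i. F i \<le> Z i) \<longrightarrow> F = Z)"

end

theory Submission
  imports Defs
begin

lemma isect_curve_right: "isect M D (curve i) = (\<Sum>j\<in>UNIV. D j * M j i)"
proof -
  have h: "\<And>a b j. a * (if j = i then 1 else 0) * b = (if j = i then a * b else (0::int))" by simp
  show ?thesis unfolding isect_def curve_def h by simp
qed

lemma isect_expand_right: "isect M A B = (\<Sum>j\<in>UNIV. B j * isect M A (curve j))"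
  unfolding isect_curve_right unfolding isect_def
  by (subst sum.swap) (simp add: sum_distrib_left algebra_simps)

lemma isect_add_left: "isect M (\<lambda>i. A i + B i) C = isect M A C + isect M B C"
  unfolding isect_def by (simp add: algebra_simps sum.distrib)

lemma isect_add_right: "isect M C (\<lambda>i. A i + B i) = isect M C A + isect M C B"
  unfolding isect_def by (simp add: algebra_simps sum.distrib)

lemma isect_sym: assumes "\<forall>i j. M i j = M j i" shows "isect M A B = isect M B A"
  unfolding isect_def using assms by (subst sum.swap) (simp add: algebra_simps)

lemma isect_curve_curve: "isect M (curve i) (curve i) = M i i"
  proof -
  have h: "\<And>b j. (if j = i then 1 else 0) * b = (if j = i then b else (0::int))" by simp
  show ?thesis unfolding isect_curve_right by (simp add: curve_def h)
qed

lemma isect_mono_curve: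
  assumes cc: "canonical_config M" and le: "\<And>k. G k \<le> F k" and eq: "G i = F i"
  shows "isect M G (curve i) \<le> isect M F (curve i)"
  unfolding isect_curve_right
proof (rule sum_mono)
  fix k
  show "G k * M k i \<le> F k * M k i"
  proof (cases "k = i")
    case True then show ?thesis using eq by simp
  next
    case False
    then have "M k i \<ge> 0" using cc unfolding canonical_config_def by force
    then show ?thesis using le by (simp add: mult_right_mono)
  qed
qed

lemma antinef_pos:
  assumes cc: "canonical_config M" and ef: "effective F" and nz: "F \<noteq> (\<lambda>_. 0)"
    and an: "anti_nef M F"
  shows "F i > 0"
proof -
  obtain j where "F j \<noteq> 0" using nz by auto
  then have j: "F j > 0" using ef unfolding effective_def by (simp add: less_le)
  have "(j, i) \<in> {(a, b). M a b \<noteq> 0}\<^sup>*" using cc unfolding canonical_config_def by blast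
  then show ?thesis
  proof (induction rule: rtrancl_induct)
    case base then show ?case using j .
  next
    case (step y z)
    show ?case
    proof (rule ccontr)
      assume "\<not> 0 < F z"
      then have Fz: "F z = 0" using ef unfolding effective_def by (simp add: less_le)
      have yz: "y \<noteq> z" using step Fz by auto
      have Myz: "M y z = 1" using step cc yz unfolding canonical_config_def by force
      have nn: "\<forall>k\<in>UNIV. 0 \<le> F k * M k z"
      proof
        fix k show "0 \<le> F k * M k z"
        proof (cases "k = z")
          case True then show ?thesis using Fz by simp
        next
          case False
          then have "M k z \<ge> 0" using cc unfolding canonical_config_def by force
          then show ?thesis using ef unfolding effective_def by simp
        qed
      qed
      have "F y * M y z \<le> (\<Sum>k\<in>UNIV. F k * M k z)"
        by (rule member_le_sum) (use nn in auto)
      then have "isect M F (curve z) > 0" using Myz step.IH unfolding isect_curve_right by simp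
      then show False using an unfolding anti_nef_def by (meson not_le)
    qed
  qed
qed

lemma cycle_le:
  assumes cc: "canonical_config M" and nc: "numerical_cycle M Z"
    and ef: "effective F" and nz: "F \<noteq> (\<lambda>_. 0)" and an: "anti_nef M F"
  shows "Z i \<le> F i"
proof -
  define H where "H = (\<lambda>k. min (F k) (Z k))"
  have Zp: "\<And>k. Z k > 0" using antinef_pos[OF cc] nc unfolding numerical_cycle_def by blast
  have Fp: "\<And>k. F k > 0" using antinef_pos[OF cc ef nz an] .
  have "effective H" unfolding effective_def H_def using Zp Fp by (simp add: less_imp_le)
  moreover have "H \<noteq> (\<lambda>_. 0)"
  proof
    assume "H = (\<lambda>_. 0)" then have "H undefined = 0" by simp
    then show False using Zp Fp unfolding H_def by (metis less_irrefl min_def)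
  qed
  moreover have "anti_nef M H"
    unfolding anti_nef_def
  proof
    fix k
    show "isect M H (curve k) \<le> 0"
    proof (cases "F k \<le> Z k")
      case True
      have "isect M H (curve k) \<le> isect M F (curve k)"
        by (rule isect_mono_curve[OF cc]) (use True in \<open>auto simp: H_def\<close>)
      then show ?thesis using an unfolding anti_nef_def by (meson order_trans)
    next
      case False
      have "isect M H (curve k) \<le> isect M Z (curve k)"
        by (rule isect_mono_curve[OF cc]) (use False in \<open>auto simp: H_def\<close>)
      then show ?thesis using nc unfolding anti_nef_def numerical_cycle_def by (meson order_trans)
    qed
  qed
  moreover have "\<forall>k. H k \<le> Z k" unfolding H_def by simp
  ultimately have "H = Z" using nc unfolding numerical_cycle_def by blast
  then show ?thesis unfolding H_def by (metis min.cobounded1)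
qed


lemma g_add:
  fixes l g :: "('i::finite \<Rightarrow> int) \<Rightarrow> rat"
  assumes sym: "\<forall>i j. M i j = M j i"
    and ladd: "\<And>E F. l (\<lambda>i. E i + F i) = l E + l F"
    and gdef: "\<And>E. g E = - of_int (isect M E E) + l E"
  shows "g (\<lambda>i. A i + B i) = g A + g B - 2 * of_int (isect M A B)"
proof -
  have "isect M (\<lambda>i. A i + B i) (\<lambda>i. A i + B i) = isect M A A + isect M B B + 2 * isect M A B"
    using isect_sym[OF sym, of B A] by (simp add: isect_add_left isect_add_right)
  then show ?thesis unfolding gdef ladd by (simp add: algebra_simps)
qed

lemma laufer:
  fixes l g :: "('i::finite \<Rightarrow> int) \<Rightarrow> rat"
  assumes cc: "canonical_config M"
    and ladd: "\<And>E F. l (\<lambda>i. E i + F i) = l E + l F"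
    and lneg: "\<And>i. l (curve i) \<le> 0"
    and gdef: "\<And>E. g E = - of_int (isect M E E) + l E"
    and anF: "anti_nef M F"
  shows "(\<Sum>i\<in>UNIV. nat (F i - D i)) = n \<Longrightarrow> (\<forall>i. D i \<le> F i) \<Longrightarrow>
     \<exists>D'. anti_nef M D' \<and> (\<forall>i. D i \<le> D' i \<and> D' i \<le> F i) \<and> g D' \<le> g D"
proof (induction n arbitrary: D rule: less_induct)
  case (less n D)
  show ?case
  proof (cases "anti_nef M D")
    case True then show ?thesis using less.prems by (intro exI[of _ D]) auto
  next
    case False
    then obtain i where pos: "isect M D (curve i) > 0" unfolding anti_nef_def by (meson not_le)
    have lt: "D i < F i"
    proof (rule ccontr)
      assume "\<not> D i < F i" then have "D i = F i" using less.prems by (meson antisym not_le)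
      then have "isect M D (curve i) \<le> isect M F (curve i)"
        using isect_mono_curve[OF cc] less.prems by blast
      then show False using anF pos unfolding anti_nef_def by (meson not_le order_trans)
    qed
    define D' where "D' = (\<lambda>j. D j + curve i j)"
    have le': "\<forall>j. D' j \<le> F j" using lt less.prems by (simp add: D'_def curve_def)
    have "(\<Sum>j\<in>UNIV. nat (F j - D' j)) < (\<Sum>j\<in>UNIV. nat (F j - D j))"
      by (rule sum_strict_mono_ex1) (use lt in \<open>auto simp: D'_def curve_def\<close>)
    then obtain D'' where D'': "anti_nef M D''" "\<forall>j. D' j \<le> D'' j \<and> D'' j \<le> F j" "g D'' \<le> g D'"
      using less.IH le' less.prems(1) by blast
    have sym: "\<forall>i j. M i j = M j i" "M i i = -2" using cc unfolding canonical_config_def by auto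
    have "g D' = g D + g (curve i) - 2 * of_int (isect M D (curve i))"
      unfolding D'_def by (rule g_add[OF sym(1) ladd gdef])
    also have "g (curve i) = 2 + l (curve i)" using gdef isect_curve_curve[of M i] sym(2) by simp
    finally have eq: "g D' = g D + (2 + l (curve i)) - 2 * of_int (isect M D (curve i))" .
    have "(1::rat) \<le> of_int (isect M D (curve i))" using pos by simp
    then have "g D' \<le> g D" using eq lneg[of i] by linarith
    moreover have "\<forall>j. D j \<le> D'' j"
    proof
      fix j
      have "D j \<le> D' j" by (simp add: D'_def curve_def)
      then show "D j \<le> D'' j" using D''(2) by (meson order_trans)
    qed
    ultimately show ?thesis using D'' by (meson order_trans)
  qed
qed


theorem mainTheorem12:
  fixes M :: "'i::finite \<Rightarrow> 'i \<Rightarrow> int"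
    and l :: "('i \<Rightarrow> int) \<Rightarrow> rat"
    and g :: "('i \<Rightarrow> int) \<Rightarrow> rat"
    and Znum :: "'i \<Rightarrow> int"
  assumes "canonical_config M"
    and "numerical_cycle M Znum"
    and "\<And>E F. l (\<lambda>i. E i + F i) = l E + l F"
    and "\<And>i. l (curve i) \<le> 0"
    and "\<And>E. g E = - of_int (isect M E E) + l E"
  shows "(\<forall>E. effective E \<and> E \<noteq> (\<lambda>_. 0) \<longrightarrow> g E > 0) \<longleftrightarrow> g Znum > 0"
proof
  assume "\<forall>E. effective E \<and> E \<noteq> (\<lambda>_. 0) \<longrightarrow> g E > 0"
  then show "g Znum > 0" using assms(2) unfolding numerical_cycle_def by blast
next
  assume gZ: "g Znum > 0"
  note cc = assms(1) and nc = assms(2) and ladd = assms(3) and lneg = assms(4) and gdef = assms(5)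
  have sym: "\<forall>i j. M i j = M j i" using cc unfolding canonical_config_def by auto
  have Zeff: "effective Znum" and Zan: "anti_nef M Znum" and Znz: "Znum \<noteq> (\<lambda>_. 0)"
    using nc unfolding numerical_cycle_def by auto
  have Zp: "\<And>k. Znum k > 0" using antinef_pos[OF cc Zeff Znz Zan] .
  have l0: "l (\<lambda>_. 0) = 0" using ladd[of "\<lambda>_. 0" "\<lambda>_. 0"] by simp
  have g0: "g (\<lambda>_. 0) = 0" using gdef[of "\<lambda>_. 0"] l0 by (simp add: isect_def)
  have P: "\<And>E::'i \<Rightarrow> int. effective E \<Longrightarrow> E \<noteq> (\<lambda>_. 0) \<Longrightarrow> (\<forall>i. E i \<le> int k * Znum i) \<Longrightarrow> g E > 0" for k
  proof (induction k)
    case 0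
    then have "E = (\<lambda>_. 0)" unfolding effective_def by (simp add: antisym fun_eq_iff)
    then show ?case using 0 by simp
  next
    case (Suc k E)
    define F where "F = (\<lambda>i. int (Suc k) * Znum i)"
    have anF: "anti_nef M F" unfolding anti_nef_def
    proof
      fix i
      have "isect M F (curve i) = int (Suc k) * isect M Znum (curve i)"
        unfolding F_def isect_curve_right by (simp add: sum_distrib_left algebra_simps)
      then show "isect M F (curve i) \<le> 0" using Zan unfolding anti_nef_def
        by (simp add: mult_nonneg_nonpos)
    qed
    obtain Es where Es: "anti_nef M Es" "\<forall>i. E i \<le> Es i \<and> Es i \<le> F i" "g Es \<le> g E"
      using laufer[OF cc ladd lneg gdef anF refl, of E] Suc.prems(3) unfolding F_def by blast
    have Eseff: "effective Es" using Es(2) Suc.prems(1) unfolding effective_def by (meson order_trans)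
    have Esnz: "Es \<noteq> (\<lambda>_. 0)"
    proof
      assume "Es = (\<lambda>_. 0)"
      then have "E = (\<lambda>_. 0)" using Es(2) Suc.prems(1) unfolding effective_def
        by (simp add: antisym fun_eq_iff)
      then show False using Suc.prems(2) by simp
    qed
    have ZE: "\<And>i. Znum i \<le> Es i" using cycle_le[OF cc nc Eseff Esnz Es(1)] .
    define E' where "E' = (\<lambda>i. Es i - Znum i)"
    have E'eff: "effective E'" using ZE unfolding E'_def effective_def by simp
    have E'le: "\<forall>i. E' i \<le> int k * Znum i" using Es(2) unfolding E'_def F_def
      by (simp add: algebra_simps)
    have Esum: "Es = (\<lambda>i. Znum i + E' i)" unfolding E'_def by simp
    have gE': "g E' \<ge> 0"
    proof (cases "E' = (\<lambda>_. 0)")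
      case True then show ?thesis using g0 by simp
    next
      case False then show ?thesis using Suc.IH[OF E'eff False E'le] by simp
    qed
    have "isect M Znum E' \<le> 0"
      unfolding isect_expand_right[of M Znum E']
    proof (rule sum_nonpos)
      fix j
      show "E' j * isect M Znum (curve j) \<le> 0"
        using E'eff Zan unfolding effective_def anti_nef_def by (simp add: mult_nonneg_nonpos)
    qed
    then have "(of_int (isect M Znum E') :: rat) \<le> 0" by simp
    moreover have "g Es = g Znum + g E' - 2 * of_int (isect M Znum E')"
      unfolding Esum by (rule g_add[OF sym ladd gdef])
    ultimately have "g Es > 0" using gZ gE' by linarith
    then show ?case using Es(3) by linarith
  qed
  show "\<forall>E. effective E \<and> E \<noteq> (\<lambda>_. 0) \<longrightarrow> g E > 0"
  proof (intro allI impI)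
    fix E :: "'i \<Rightarrow> int" assume h: "effective E \<and> E \<noteq> (\<lambda>_. 0)"
    define k where "k = nat (\<Sum>j\<in>UNIV. E j)"
    have "\<forall>i. E i \<le> int k * Znum i"
    proof
      fix i
      have nn: "0 \<le> (\<Sum>j\<in>UNIV. E j)" using h unfolding effective_def by (simp add: sum_nonneg)
      have "E i \<le> (\<Sum>j\<in>UNIV. E j)" by (rule member_le_sum) (use h in \<open>auto simp: effective_def\<close>)
      also have "\<dots> = int k" using nn unfolding k_def by simp
      also have "\<dots> \<le> int k * Znum i" using mult_left_mono[of 1 "Znum i" "int k"] Zp[of i] by simp
      finally show "E i \<le> int k * Znum i" .
    qed
    then show "g E > 0" using P h by blast
  qed
qed

end
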